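(* Let $\mathfrak s$ be a $4$-dimensional real Lie algebra admitting an abelian complex structure, and let $\mathfrak z$ be its center. Then $\mathfrak s/\mathfrak z$ is isomorphic to $\mathfrak{aff}(A)$ for some finite-dimensional real commutative associative algebra $A$ (possibly $A=0$, or with trivial multiplication).
   Context: An abelian complex structure on a real Lie algebra $\mathfrak g$ is a linear map $J$ with $J^2=-\mathrm{Id}$ and $[Jx,Jy]=[x,y]$ for all $x,y$. For a commutative associative algebra $A$, $\mathfrak{aff}(A)$ is the Lie algebra $A\oplus A$ with bracket $[(a,b),(a',b')]=(0,ab'-a'b)$. *)

theory Defs
  imports "HOL-Analysis.Analysis" "HOL-Library.Function_Algebras"
begin

text \<open>Pointwise real vector space structure on functions, so that
  nat \<Rightarrow> real can serve as an ambient space for arbitrary finite-dimensional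
  real algebras.\<close>

instantiation "fun" :: (type, real_vector) real_vector
begin
definition scaleR_fun :: "real \<Rightarrow> ('a \<Rightarrow> 'b) \<Rightarrow> 'a \<Rightarrow> 'b"
  where "scaleR_fun r f = (\<lambda>x. r *\<^sub>R f x)"
instance
  by standard (auto simp: scaleR_fun_def fun_eq_iff scaleR_add_right scaleR_add_left)
end

definition lie_algebra :: "('a::real_vector \<Rightarrow> 'a \<Rightarrow> 'a) \<Rightarrow> bool" where
  "lie_algebra br \<longleftrightarrow> bilinear br \<and> (\<forall>x. br x x = 0) \<and>
     (\<forall>x y z. br x (br y z) + br y (br z x) + br z (br x y) = 0)"

definition abelian_complex_structure ::
  "('a::real_vector \<Rightarrow> 'a \<Rightarrow> 'a) \<Rightarrow> ('a \<Rightarrow> 'a) \<Rightarrow> bool" where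
  "abelian_complex_structure br J \<longleftrightarrow> linear J \<and> (\<forall>x. J (J x) = - x) \<and>
     (\<forall>x y. br (J x) (J y) = br x y)"

definition lie_center :: "('a::real_vector \<Rightarrow> 'a \<Rightarrow> 'a) \<Rightarrow> 'a set" where
  "lie_center br = {x. \<forall>y. br x y = 0}"

text \<open>A finite-dimensional real commutative associative (not necessarily unital)
  algebra, with underlying space the linear subspace A and multiplication m
  (only its restriction to A matters).\<close>
definition fd_comm_assoc_algebra :: "'b::real_vector set \<Rightarrow> ('b \<Rightarrow> 'b \<Rightarrow> 'b) \<Rightarrow> bool" where
  "fd_comm_assoc_algebra A m \<longleftrightarrow> subspace A \<and> (\<exists>B. finite B \<and> B \<subseteq> A \<and> span B = A) \<and>
     (\<forall>a\<in>A. \<forall>b\<in>A. m a b \<in> A) \<and>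
     (\<forall>a\<in>A. \<forall>b\<in>A. \<forall>c\<in>A. m (a + b) c = m a c + m b c) \<and>
     (\<forall>r. \<forall>a\<in>A. \<forall>b\<in>A. m (r *\<^sub>R a) b = r *\<^sub>R m a b) \<and>
     (\<forall>a\<in>A. \<forall>b\<in>A. m a b = m b a) \<and>
     (\<forall>a\<in>A. \<forall>b\<in>A. \<forall>c\<in>A. m (m a b) c = m a (m b c))"

definition aff_bracket :: "('b::real_vector \<Rightarrow> 'b \<Rightarrow> 'b) \<Rightarrow> 'b \<times> 'b \<Rightarrow> 'b \<times> 'b \<Rightarrow> 'b \<times> 'b" where
  "aff_bracket m p q = (0, m (fst p) (snd q) - m (fst q) (snd p))"

text \<open>s / center(s) is isomorphic (as Lie algebra) to aff(A): by the first
  isomorphism theorem, equivalently there is a surjective Lie algebra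
  homomorphism s \<rightarrow> aff(A) whose kernel is exactly the center.\<close>
definition quotient_by_center_iso_aff ::
  "('a::real_vector \<Rightarrow> 'a \<Rightarrow> 'a) \<Rightarrow> 'b::real_vector set \<Rightarrow> ('b \<Rightarrow> 'b \<Rightarrow> 'b) \<Rightarrow> bool" where
  "quotient_by_center_iso_aff br A m \<longleftrightarrow> (\<exists>\<phi> :: 'a \<Rightarrow> 'b \<times> 'b.
     linear \<phi> \<and> range \<phi> = A \<times> A \<and> {x. \<phi> x = 0} = lie_center br \<and>
     (\<forall>x y. \<phi> (br x y) = aff_bracket m (\<phi> x) (\<phi> y)))"

end

theory Submission imports Defs "HOL-Library.Countable_Set" begin


definition indep4 :: "'a::real_vector \<Rightarrow> 'a \<Rightarrow> 'a \<Rightarrow> 'a \<Rightarrow> bool" where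
  "indep4 p q r s \<longleftrightarrow> (\<forall>a b c d. a *\<^sub>R p + b *\<^sub>R q + c *\<^sub>R r + d *\<^sub>R s = 0 \<longrightarrow> a = 0 \<and> b = 0 \<and> c = 0 \<and> d = 0)"

definition indep2 :: "'a::real_vector \<Rightarrow> 'a \<Rightarrow> bool" where
  "indep2 p q \<longleftrightarrow> (\<forall>a b. a *\<^sub>R p + b *\<^sub>R q = 0 \<longrightarrow> a = 0 \<and> b = 0)"

lemma span2: "x \<in> span {a, b} \<longleftrightarrow> (\<exists>s t. x = s *\<^sub>R a + t *\<^sub>R b)"
proof -
  have "x \<in> span {a, b} \<longleftrightarrow> (\<exists>k. x - k *\<^sub>R a \<in> span {b})" by (rule span_breakdown_eq)
  also have "\<dots> \<longleftrightarrow> (\<exists>k t. x - k *\<^sub>R a = t *\<^sub>R b)" by (auto simp: span_singleton)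
  also have "\<dots> \<longleftrightarrow> (\<exists>s t. x = s *\<^sub>R a + t *\<^sub>R b)" by (metis add_diff_cancel_left' diff_add_cancel add.commute)
  finally show ?thesis .
qed

lemma indep4_distinct:
  assumes "indep4 p q r s"
  shows "p \<noteq> q" "p \<noteq> r" "p \<noteq> s" "q \<noteq> r" "q \<noteq> s" "r \<noteq> s"
proof -
  note h = assms[unfolded indep4_def, rule_format]
  show "p \<noteq> q" using h[of 1 "-1" 0 0] by auto
  show "p \<noteq> r" using h[of 1 0 "-1" 0] by auto
  show "p \<noteq> s" using h[of 1 0 0 "-1"] by auto
  show "q \<noteq> r" using h[of 0 1 "-1" 0] by auto
  show "q \<noteq> s" using h[of 0 1 0 "-1"] by auto
  show "r \<noteq> s" using h[of 0 0 1 "-1"] by auto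
qed

lemma indep4_span:
  fixes p q r s :: "'a::euclidean_space"
  assumes dim: "DIM('a) = 4" and ind: "indep4 p q r s"
  shows "\<exists>a b c d. y = a *\<^sub>R p + b *\<^sub>R q + c *\<^sub>R r + d *\<^sub>R s"
proof -
  note dis = indep4_distinct[OF ind]
  define B where "B = {p, q, r, s}"
  have fB: "finite B" unfolding B_def by simp
  have cB: "card B = 4" unfolding B_def using dis by simp
  have sumB: "(\<Sum>v\<in>B. u v *\<^sub>R v) = u p *\<^sub>R p + u q *\<^sub>R q + u r *\<^sub>R r + u s *\<^sub>R s" for u
    unfolding B_def using dis by (simp add: add.assoc)
  have "independent B"
  proof
    assume "dependent B"
    then obtain u where u: "\<exists>v\<in>B. u v \<noteq> 0" "(\<Sum>v\<in>B. u v *\<^sub>R v) = 0"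
      using dependent_finite[OF fB] by blast
    from u(2) have "u p = 0 \<and> u q = 0 \<and> u r = 0 \<and> u s = 0"
      using ind unfolding indep4_def sumB by blast
    with u(1) show False unfolding B_def by auto
  qed
  hence "UNIV \<subseteq> span B" using card_eq_dim[of B UNIV] fB cB dim by simp
  hence "y \<in> range (\<lambda>u. \<Sum>v\<in>B. u v *\<^sub>R v)" using span_finite[OF fB] by auto
  then obtain u where "y = (\<Sum>v\<in>B. u v *\<^sub>R v)" by auto
  thus ?thesis unfolding sumB by blast
qed

lemma indep2_independent:
  assumes "indep2 p q" shows "independent {p, q}" "p \<noteq> q"
proof -
  note h = assms[unfolded indep2_def, rule_format]
  show pq: "p \<noteq> q" using h[of 1 "-1"] by auto
  show "independent {p, q}"
  proof
    assume "dependent {p, q}"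
    then obtain u where u: "\<exists>v\<in>{p,q}. u v \<noteq> 0" "(\<Sum>v\<in>{p,q}. u v *\<^sub>R v) = 0"
      using dependent_finite[of "{p,q}"] by auto
    from u(2) pq have "u p *\<^sub>R p + u q *\<^sub>R q = 0" by simp
    hence "u p = 0 \<and> u q = 0" using h by blast
    with u(1) show False by auto
  qed
qed

lemma indep2_dim:
  fixes p q :: "'a::euclidean_space"
  assumes "indep2 p q" shows "dim (span {p, q}) = 2"
  using dim_span_eq_card_independent[OF indep2_independent(1)[OF assms]] indep2_independent(2)[OF assms]
  by simp

lemma indep2_spans:
  fixes p q x y :: "'a::euclidean_space"
  assumes i1: "indep2 p q" and i2: "indep2 x y" and sub: "x \<in> span {p, q}" "y \<in> span {p, q}"
  shows "span {p, q} \<subseteq> span {x, y}"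
proof -
  have "independent {x, y} = (span {p, q} \<subseteq> span {x, y})"
    by (rule card_eq_dim) (use sub indep2_dim[OF i1] indep2_independent(2)[OF i2] in auto)
  thus ?thesis using indep2_independent(1)[OF i2] by simp
qed

lemma two_func:
  fixes f g :: "'a::euclidean_space \<Rightarrow> real"
  assumes dim: "DIM('a) = 4" and lf: "linear f" and lg: "linear g"
  shows "\<exists>x. x \<noteq> 0 \<and> f x = 0 \<and> g x = 0"
proof (rule ccontr)
  assume nx: "\<not> ?thesis"
  define h where "h x = (f x, g x)" for x
  have lh: "linear h" unfolding h_def
    by (rule linearI) (simp_all add: linear_add[OF lf] linear_add[OF lg] linear_scale[OF lf] linear_scale[OF lg])
  have "inj h"
  proof (rule injI)
    fix x y assume "h x = h y"
    hence "f (x - y) = 0 \<and> g (x - y) = 0"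
      unfolding h_def by (simp add: linear_diff[OF lf] linear_diff[OF lg])
    thus "x = y" using nx by auto
  qed
  hence "dim (h ` UNIV) = dim (UNIV :: 'a set)"
    using dim_image_eq[OF lh] by (metis inj_on_subset subset_UNIV)
  moreover have "dim (h ` UNIV) \<le> dim (UNIV :: (real \<times> real) set)" by (rule dim_subset) simp
  ultimately show False using dim by simp
qed



locale acs =
  fixes br :: "'a::real_vector \<Rightarrow> 'a \<Rightarrow> 'a" and J :: "'a \<Rightarrow> 'a"
  assumes bil: "bilinear br" and alt: "\<And>x. br x x = 0"
  and jac: "\<And>x y z. br x (br y z) + br y (br z x) + br z (br x y) = 0"
  and linJ: "linear J" and JJ[simp]: "\<And>x. J (J x) = - x"
  and ab[simp]: "\<And>x y. br (J x) (J y) = br x y"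
begin

lemma ladd[simp]: "br (x+y) z = br x z + br y z" using bilinear_ladd[OF bil] .
lemma radd[simp]: "br x (y+z) = br x y + br x z" using bilinear_radd[OF bil] .
lemma lmul[simp]: "br (c *\<^sub>R x) y = c *\<^sub>R br x y" using bilinear_lmul[OF bil] .
lemma rmul[simp]: "br x (c *\<^sub>R y) = c *\<^sub>R br x y" using bilinear_rmul[OF bil] .
lemma lneg[simp]: "br (- x) y = - br x y" using bilinear_lneg[OF bil] .
lemma rneg[simp]: "br x (- y) = - br x y" using bilinear_rneg[OF bil] .
lemma lsub[simp]: "br (x - y) z = br x z - br y z" using bilinear_lsub[OF bil] .
lemma rsub[simp]: "br x (y - z) = br x y - br x z" using bilinear_rsub[OF bil] .
lemma lzero[simp]: "br 0 y = 0" using bilinear_lzero[OF bil] .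
lemma rzero[simp]: "br x 0 = 0" using bilinear_rzero[OF bil] .
lemma Jadd[simp]: "J (x+y) = J x + J y" using linear_add[OF linJ] .
lemma Jscale[simp]: "J (c *\<^sub>R x) = c *\<^sub>R J x" using linear_scale[OF linJ] .
lemma Jneg[simp]: "J (- x) = - J x" using linear_neg[OF linJ] .
lemma Jsub[simp]: "J (x - y) = J x - J y" using linear_diff[OF linJ] .
lemma J0[simp]: "J 0 = 0" using linear_0[OF linJ] .
lemma alt'[simp]: "br x x = 0" by (rule alt)

lemma anti: "br y x = - br x y"
proof -
  have "0 = br (x+y) (x+y)" by simp
  also have "\<dots> = br x x + br x y + (br y x + br y y)" by (simp only: ladd radd add_ac)
  also have "\<dots> = br x y + br y x" by simp
  finally have "br x y + br y x = 0" by (rule sym)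
  thus ?thesis by (simp add: add_eq_0_iff)
qed

lemma jac_s: "br x (br y z) = - br y (br z x) - br z (br x y)"
proof -
  have "br x (br y z) = (br x (br y z) + br y (br z x) + br z (br x y)) - br y (br z x) - br z (br x y)"
    by simp
  thus ?thesis using jac[of x y z] by simp
qed

lemma Jr[simp]: "br x (J y) = - br (J x) y"
proof -
  have "br (J x) (J (J y)) = br x (J y)" by (rule ab)
  thus ?thesis by simp
qed

lemma symJ: "br (J x) y = br (J y) x"
proof -
  have "br (J y) x = - br x (J y)" by (rule anti)
  thus ?thesis by simp
qed

lemma jac2: "br (br x y) z = br x (br y z) - br y (br x z)"
proof -
  have "br (br x y) z = - br z (br x y)" by (rule anti)
  also have "\<dots> = br x (br y z) + br y (br z x)" using jac_s[of z x y]
    by simp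
  also have "br z x = - br x z" by (rule anti)
  finally show ?thesis by simp
qed

definition mu :: "'a \<Rightarrow> 'a \<Rightarrow> 'a" where "mu x y = br x y - J (br (J x) y)"

lemma mu_ladd[simp]: "mu (x+y) z = mu x z + mu y z" by (simp add: mu_def algebra_simps)
lemma mu_radd[simp]: "mu x (y+z) = mu x y + mu x z" by (simp add: mu_def algebra_simps)
lemma mu_lsub[simp]: "mu (x-y) z = mu x z - mu y z" by (simp add: mu_def algebra_simps)
lemma mu_rsub[simp]: "mu x (y-z) = mu x y - mu x z" by (simp add: mu_def algebra_simps)
lemma mu_lmul[simp]: "mu (c *\<^sub>R x) z = c *\<^sub>R mu x z" by (simp add: mu_def algebra_simps)
lemma mu_rmul[simp]: "mu x (c *\<^sub>R z) = c *\<^sub>R mu x z" by (simp add: mu_def algebra_simps)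

lemma br_mu: "mu x y - mu y x = 2 *\<^sub>R br x y"
proof -
  have "br (J y) x = br (J x) y" by (rule symJ)
  moreover have "br y x = - br x y" by (rule anti)
  ultimately show ?thesis by (simp add: mu_def scaleR_2)
qed

lemma R1: "br a (br b c) + br (J a) (br (J b) c) = br c (br b a) + br (J c) (br (J b) a)"
proof -
  have e1: "br a (br b c) - br c (br b a) = - br b (br c a)"
  proof -
    have "br c (br b a) = - br c (br a b)" using anti[of a b] by simp
    thus ?thesis using jac_s[of a b c] by (simp add: algebra_simps)
  qed
  have e2: "br (J a) (br (J b) c) - br (J c) (br (J b) a) = br (br a c) b"
  proof -
    have "br (J b) c = br (J c) b" by (rule symJ)
    moreover have "br (J b) a = br (J a) b" by (rule symJ)
    moreover have "br (br (J a) (J c)) b = br (J a) (br (J c) b) - br (J c) (br (J a) b)" by (rule jac2)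
    ultimately show ?thesis by simp
  qed
  have e3: "br (br a c) b = - br b (br a c)" by (rule anti)
  have e4: "br a c = - br c a" by (rule anti)
  have "(br a (br b c) + br (J a) (br (J b) c)) - (br c (br b a) + br (J c) (br (J b) a))
      = (br a (br b c) - br c (br b a)) + (br (J a) (br (J b) c) - br (J c) (br (J b) a))"
    by (simp add: algebra_simps)
  also have "\<dots> = - br b (br c a) + br (br a c) b" using e1 e2 by simp
  also have "\<dots> = 0" using e3 e4 by simp
  finally show ?thesis by (simp add: eq_iff_diff_eq_0[symmetric])
qed

lemma I1: "br (J a) (br b c) - br a (br (J b) c) = br (J c) (br b a) - br c (br (J b) a)"
proof -
  have e1: "br (J a) (br b c) = br (br (J a) b) c + br b (br (J a) c)"
    using jac2[of "J a" b c] by (simp add: algebra_simps)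
  have e2: "br (J c) (br b a) = br (br (J c) b) a + br b (br (J c) a)"
    using jac2[of "J c" b a] by (simp add: algebra_simps)
  have e3: "br (J a) c = br (J c) a" by (rule symJ)
  have e4: "br (J a) b = br (J b) a" by (rule symJ)
  have e5: "br (J c) b = br (J b) c" by (rule symJ)
  have e6: "br a (br (J b) c) = - br (br (J b) c) a" by (rule anti)
  have e7: "br c (br (J b) a) = - br (br (J b) a) c" by (rule anti)
  show ?thesis unfolding e1 e2 e3 e4 e5 e6 e7 by (simp add: algebra_simps)
qed

lemma mu_mu_expand: "mu a (mu b c) = (br a (br b c) + br (J a) (br (J b) c))
    - J (br (J a) (br b c) - br a (br (J b) c))"
  by (simp add: mu_def algebra_simps)

lemma J1: "mu a (mu b c) = mu c (mu b a)"
  unfolding mu_mu_expand using R1[of a b c] I1[of a b c] by simp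

lemma R2: "br (br b c) a - br (J a) (br (J b) c) = br (br b a) c - br (J c) (br (J b) a)"
proof -
  have e1: "br (br b c) a - br (br b a) c = br b (br c a)"
  proof -
    have "br (br b c) a = - br a (br b c)" by (rule anti)
    moreover have "br (br b a) c = br c (br a b)" using anti[of "br b a" c] anti[of a b] by simp
    ultimately show ?thesis using jac_s[of a b c] by (simp add: algebra_simps)
  qed
  have e2: "br (J c) (br (J b) a) - br (J a) (br (J b) c) = - br b (br c a)"
  proof -
    have "br (J b) a = br (J a) b" by (rule symJ)
    moreover have "br (J b) c = br (J c) b" by (rule symJ)
    moreover have "br (br (J c) (J a)) b = br (J c) (br (J a) b) - br (J a) (br (J c) b)" by (rule jac2)
    moreover have "br (br c a) b = - br b (br c a)" by (rule anti)
    ultimately show ?thesis by simp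
  qed
  have "(br (br b c) a - br (J a) (br (J b) c)) - (br (br b a) c - br (J c) (br (J b) a))
     = (br (br b c) a - br (br b a) c) + (br (J c) (br (J b) a) - br (J a) (br (J b) c))"
    by (simp add: algebra_simps)
  also have "\<dots> = 0" using e1 e2 by simp
  finally show ?thesis by (simp add: eq_iff_diff_eq_0[symmetric])
qed

lemma I2: "br (J a) (br b c) + br (br (J b) c) a = br (J c) (br b a) + br (br (J b) a) c"
proof -
  have e1: "br (J a) (br b c) = br (br (J a) b) c + br b (br (J a) c)"
    using jac2[of "J a" b c] by (simp add: algebra_simps)
  have e2: "br (J c) (br b a) = br (br (J c) b) a + br b (br (J c) a)"
    using jac2[of "J c" b a] by (simp add: algebra_simps)
  have e3: "br (J a) c = br (J c) a" by (rule symJ)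
  have e4: "br (J a) b = br (J b) a" by (rule symJ)
  have e5: "br (J c) b = br (J b) c" by (rule symJ)
  show ?thesis unfolding e1 e2 e3 e4 e5 by (simp add: algebra_simps)
qed

lemma mu_mu_expand2: "mu (mu b c) a = (br (br b c) a - br (J a) (br (J b) c))
    - J (br (J a) (br b c) + br (br (J b) c) a)"
proof -
  have "br (J (br (J b) c)) a = br (J a) (br (J b) c)" by (rule symJ)
  moreover have "br (J (br b c)) a = br (J a) (br b c)" by (rule symJ)
  ultimately show ?thesis by (simp add: mu_def algebra_simps)
qed

lemma J2: "mu (mu b c) a = mu (mu b a) c"
  unfolding mu_mu_expand2 using R2[of b c a] I2[of a b c] by simp

lemma S1: "mu (mu a b) (mu d c) = mu (mu c b) (mu d a)"
proof -
  have "mu (mu a b) (mu d c) = mu (mu a (mu d c)) b" by (rule J2)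
  also have "mu a (mu d c) = mu c (mu d a)" by (rule J1)
  also have "mu (mu c (mu d a)) b = mu (mu c b) (mu d a)" by (rule J2)
  finally show ?thesis .
qed

lemma S2: "mu (mu a b) (mu d c) = mu (mu a d) (mu b c)"
proof -
  have "mu (mu a b) (mu d c) = mu c (mu d (mu a b))" by (rule J1)
  also have "mu d (mu a b) = mu b (mu a d)" by (rule J1)
  also have "mu c (mu b (mu a d)) = mu (mu a d) (mu b c)" by (rule J1)
  finally show ?thesis .
qed

lemma S3: "mu (mu p q) (mu r s) = mu (mu s r) (mu q p)"
  using S1[of p q r s] S2[of s q r p] by simp

lemma metab: "br (br a b) (br c d) = 0"
proof -
  define X where "X = mu a b - mu b a"
  define Y where "Y = mu c d - mu d c"
  have hX: "X = 2 *\<^sub>R br a b" unfolding X_def by (rule br_mu)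
  have hY: "Y = 2 *\<^sub>R br c d" unfolding Y_def by (rule br_mu)
  have "mu X Y = mu Y X" unfolding X_def Y_def
    using S3[of a b c d] S3[of a b d c] S3[of b a c d] S3[of b a d c]
    by (simp add: algebra_simps)
  hence "2 *\<^sub>R br X Y = 0" using br_mu[of X Y] by simp
  hence "br X Y = 0" by simp
  thus ?thesis unfolding hX hY by simp
qed

lemma center_J: "(\<forall>y. br c y = 0) \<Longrightarrow> (\<forall>y. br (J c) y = 0)"
proof (intro allI)
  fix y assume h: "\<forall>y. br c y = 0"
  have "br (J c) y = br (J y) c" by (rule symJ)
  also have "\<dots> = - br c (J y)" by (rule anti)
  finally have e: "br (J c) y = - br c (J y)" .
  have "br c (J y) = 0" using h by blast
  with e show "br (J c) y = 0" by (simp del: Jr)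
qed


lemma Jinv_indep:
  assumes W: "subspace W" and WJ: "\<forall>w\<in>W. J w \<in> W" and x: "x \<notin> W"
    and h: "\<alpha> *\<^sub>R x + \<beta> *\<^sub>R J x \<in> W"
  shows "\<alpha> = 0 \<and> \<beta> = 0"
proof (rule ccontr)
  assume nz: "\<not> (\<alpha> = 0 \<and> \<beta> = 0)"
  define t where "t = \<alpha> *\<^sub>R x + \<beta> *\<^sub>R J x"
  have tW: "t \<in> W" using h t_def by simp
  have JtW: "J t \<in> W" using WJ tW by blast
  have "\<alpha> *\<^sub>R t - \<beta> *\<^sub>R J t \<in> W"
    using subspace_diff[OF W subspace_scale[OF W tW] subspace_scale[OF W JtW]] .
  moreover have "\<alpha> *\<^sub>R t - \<beta> *\<^sub>R J t = (\<alpha>\<^sup>2 + \<beta>\<^sup>2) *\<^sub>R x"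
    unfolding t_def by (simp add: algebra_simps power2_eq_square)
  moreover have "\<alpha>\<^sup>2 + \<beta>\<^sup>2 \<noteq> 0" using nz by (simp add: sum_power2_eq_zero_iff)
  ultimately have "inverse (\<alpha>\<^sup>2 + \<beta>\<^sup>2) *\<^sub>R ((\<alpha>\<^sup>2 + \<beta>\<^sup>2) *\<^sub>R x) \<in> W"
    using subspace_scale[OF W] by metis
  with \<open>\<alpha>\<^sup>2 + \<beta>\<^sup>2 \<noteq> 0\<close> have "x \<in> W" by simp
  with x show False by simp
qed

lemma indep4W:
  assumes W: "subspace W" and WJ: "\<forall>w\<in>W. J w \<in> W" and q: "q \<notin> W" and p: "p \<in> W" "p \<noteq> 0"
  shows "indep4 q (J q) p (J p)"
  unfolding indep4_def
proof (intro allI impI)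
  fix a b c d assume h: "a *\<^sub>R q + b *\<^sub>R J q + c *\<^sub>R p + d *\<^sub>R J p = 0"
  have "c *\<^sub>R p + d *\<^sub>R J p \<in> W"
    using subspace_add[OF W subspace_scale[OF W p(1)] subspace_scale[OF W WJ[rule_format, OF p(1)]]] .
  hence "- (c *\<^sub>R p + d *\<^sub>R J p) \<in> W" using subspace_neg[OF W] by blast
  moreover have "a *\<^sub>R q + b *\<^sub>R J q = - (c *\<^sub>R p + d *\<^sub>R J p)"
    using h by (simp add: algebra_simps eq_neg_iff_add_eq_0)
  ultimately have "a *\<^sub>R q + b *\<^sub>R J q \<in> W" by (simp only:)
  hence ab: "a = 0 \<and> b = 0" by (rule Jinv_indep[OF W WJ q])
  hence "c *\<^sub>R p + d *\<^sub>R J p \<in> {0}" using h by simp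
  hence "c = 0 \<and> d = 0" using Jinv_indep[of "{0}" p c d] p(2) by simp
  with ab show "a = 0 \<and> b = 0 \<and> c = 0 \<and> d = 0" by simp
qed

lemma indep2J: "p \<noteq> 0 \<Longrightarrow> indep2 p (J p)"
  unfolding indep2_def using Jinv_indep[of "{0}" p] by simp

lemma spanJ: "\<forall>w\<in>span {p, J p}. J w \<in> span {p, J p}"
proof
  fix w assume "w \<in> span {p, J p}"
  then obtain s t where "w = s *\<^sub>R p + t *\<^sub>R J p" using span2 by blast
  hence "J w = (- t) *\<^sub>R p + s *\<^sub>R J p" by simp
  thus "J w \<in> span {p, J p}" using span2 by blast
qed
end


definition Emb :: "'a::euclidean_space \<Rightarrow> nat \<Rightarrow> real" where
  "Emb x = (\<lambda>n. x \<bullet> from_nat_into Basis n)"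

lemma Emb_linear: "linear Emb"
  by (rule linearI) (auto simp: Emb_def fun_eq_iff inner_add_left scaleR_fun_def plus_fun_def)

lemma Emb_inj: "inj Emb"
proof (rule injI)
  fix x y :: 'a assume h: "Emb x = Emb y"
  show "x = y"
  proof (rule euclidean_eqI)
    fix b :: 'a assume b: "b \<in> Basis"
    have "b \<in> range (from_nat_into Basis)" using b by (simp add: countable_finite)
    then obtain n where "b = from_nat_into Basis n" by auto
    thus "x \<bullet> b = y \<bullet> b" using h unfolding Emb_def fun_eq_iff by auto
  qed
qed

lemma Emb_zero_iff: "Emb x = 0 \<longleftrightarrow> x = 0"
  using Emb_inj linear_0[OF Emb_linear] by (metis injD)

lemma center_subspace:
  assumes "bilinear br" shows "subspace (lie_center br)"
  unfolding subspace_def lie_center_def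
  using bilinear_ladd[OF assms] bilinear_lmul[OF assms] bilinear_lzero[OF assms] by auto

lemma KL:
  fixes br :: "'a::euclidean_space \<Rightarrow> 'a \<Rightarrow> 'a" and a :: "'a set" and T :: "'a \<Rightarrow> 'a"
  assumes lie: "lie_algebra br" and sub: "subspace a" and linT: "linear T"
  and D1: "\<And>x. \<exists>u\<in>a. \<exists>v\<in>a. x - T u - v \<in> lie_center br"
  and D2: "\<And>u v. u \<in> a \<Longrightarrow> v \<in> a \<Longrightarrow> T u + v \<in> lie_center br \<Longrightarrow> u = 0 \<and> v = 0"
  and C1: "\<And>u u'. u \<in> a \<Longrightarrow> u' \<in> a \<Longrightarrow> br (T u) (T u') \<in> lie_center br \<and> br u u' \<in> lie_center br"
  and C2: "\<And>u v. u \<in> a \<Longrightarrow> v \<in> a \<Longrightarrow> \<exists>w\<in>a. br (T u) v - w \<in> lie_center br"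
  and C3: "\<And>u v. u \<in> a \<Longrightarrow> v \<in> a \<Longrightarrow> br (T u) v - br (T v) u \<in> lie_center br"
  shows "\<exists>(A :: (nat \<Rightarrow> real) set) m. fd_comm_assoc_algebra A m \<and> quotient_by_center_iso_aff br A m"
proof -
  define Z where "Z = lie_center br"
  have bil: "bilinear br" and alt: "\<And>x. br x x = 0"
    and jac: "\<And>x y z. br x (br y z) + br y (br z x) + br z (br x y) = 0"
    using lie unfolding lie_algebra_def by auto
  note bsimps[simp] = bilinear_ladd[OF bil] bilinear_radd[OF bil] bilinear_lmul[OF bil]
    bilinear_rmul[OF bil] bilinear_lneg[OF bil] bilinear_rneg[OF bil] bilinear_lsub[OF bil]
    bilinear_rsub[OF bil] bilinear_lzero[OF bil] bilinear_rzero[OF bil]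
  note Tsimps[simp] = linear_add[OF linT] linear_diff[OF linT] linear_scale[OF linT]
    linear_0[OF linT] linear_neg[OF linT]
  have subZ: "subspace Z" unfolding Z_def by (rule center_subspace[OF bil])
  have anti: "br y x = - br x y" for x y
  proof -
    have "0 = br (x+y) (x+y)" using alt by simp
    also have "\<dots> = br x x + br x y + (br y x + br y y)" by (simp only: bsimps add_ac)
    also have "\<dots> = br x y + br y x" using alt by simp
    finally have "br x y + br y x = 0" by (rule sym)
    thus ?thesis by (simp add: add_eq_0_iff)
  qed
  have ZL: "br c y = 0" if "c \<in> Z" for c y using that unfolding Z_def lie_center_def by auto
  have ZR: "br y c = 0" if "c \<in> Z" for c y using ZL[OF that, of y] anti[of y c] by simp
  have jac2: "br (br x y) z = br x (br y z) - br y (br x z)" for x y z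
  proof -
    have "br x (br y z) = (br x (br y z) + br y (br z x) + br z (br x y)) - br y (br z x) - br z (br x y)"
      by simp
    hence "br x (br y z) = - br y (br z x) - br z (br x y)" using jac[of x y z] by simp
    moreover have "br (br x y) z = - br z (br x y)" by (rule anti)
    moreover have "br z x = - br x z" by (rule anti)
    ultimately show ?thesis by simp
  qed
  note Zadd = subspace_add[OF subZ] and Zdiff = subspace_diff[OF subZ]
    and Zscale = subspace_scale[OF subZ] and Z0 = subspace_0[OF subZ]
  note aadd = subspace_add[OF sub] and adiff = subspace_diff[OF sub]
    and ascale = subspace_scale[OF sub] and a0 = subspace_0[OF sub]
  define Pr where "Pr x = (THE p. fst p \<in> a \<and> snd p \<in> a \<and> x - T (fst p) - snd p \<in> Z)" for x
  have Pr_unique: "Pr x = (u, v)" if "u \<in> a" "v \<in> a" "x - T u - v \<in> Z" for x u v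
    unfolding Pr_def
  proof (rule the_equality)
    show "fst (u, v) \<in> a \<and> snd (u, v) \<in> a \<and> x - T (fst (u, v)) - snd (u, v) \<in> Z" using that by simp
  next
    fix p assume p: "fst p \<in> a \<and> snd p \<in> a \<and> x - T (fst p) - snd p \<in> Z"
    have "(x - T u - v) - (x - T (fst p) - snd p) \<in> Z" using that p Zdiff by blast
    moreover have "(x - T u - v) - (x - T (fst p) - snd p) = T (fst p - u) + (snd p - v)"
      by (simp add: algebra_simps)
    ultimately have "fst p - u = 0 \<and> snd p - v = 0" using D2 p that adiff by (metis Z_def)
    thus "p = (u, v)" by (simp add: prod_eq_iff)
  qed
  have Pr_spec: "fst (Pr x) \<in> a \<and> snd (Pr x) \<in> a \<and> x - T (fst (Pr x)) - snd (Pr x) \<in> Z" for x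
  proof -
    obtain u v where "u \<in> a" "v \<in> a" "x - T u - v \<in> Z" using D1[of x] unfolding Z_def by blast
    thus ?thesis using Pr_unique by simp
  qed
  define U where "U x = fst (Pr x)" for x
  define V where "V x = snd (Pr x)" for x
  have Ua: "U x \<in> a" and Va: "V x \<in> a" and UVZ: "x - T (U x) - V x \<in> Z" for x
    using Pr_spec unfolding U_def V_def by auto
  have UV_eq: "U x = u \<and> V x = v" if "u \<in> a" "v \<in> a" "x - T u - v \<in> Z" for x u v
    using Pr_unique[OF that] unfolding U_def V_def by simp
  have UV_add: "U (x + y) = U x + U y \<and> V (x + y) = V x + V y" for x y
  proof (rule UV_eq)
    show "U x + U y \<in> a" "V x + V y \<in> a" using Ua Va aadd by auto
    have "(x - T (U x) - V x) + (y - T (U y) - V y) \<in> Z" using UVZ Zadd by blast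
    thus "x + y - T (U x + U y) - (V x + V y) \<in> Z" by (simp add: algebra_simps)
  qed
  have UV_scale: "U (c *\<^sub>R x) = c *\<^sub>R U x \<and> V (c *\<^sub>R x) = c *\<^sub>R V x" for c x
  proof (rule UV_eq)
    show "c *\<^sub>R U x \<in> a" "c *\<^sub>R V x \<in> a" using Ua Va ascale by auto
    have "c *\<^sub>R (x - T (U x) - V x) \<in> Z" using UVZ Zscale by blast
    thus "c *\<^sub>R x - T (c *\<^sub>R U x) - c *\<^sub>R V x \<in> Z" by (simp add: algebra_simps)
  qed
  have linU: "linear U" by (rule linearI) (use UV_add UV_scale in auto)
  have linV: "linear V" by (rule linearI) (use UV_add UV_scale in auto)
  note Usimps = linear_add[OF linU] linear_diff[OF linU] linear_scale[OF linU] linear_0[OF linU]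
  note Vsimps = linear_add[OF linV] linear_diff[OF linV] linear_scale[OF linV] linear_0[OF linV]
  have UV_T: "U (T u + v) = u \<and> V (T u + v) = v" if "u \<in> a" "v \<in> a" for u v
    using UV_eq[OF that] Z0 by simp
  have UV_Z: "U c = 0 \<and> V c = 0" if "c \<in> Z" for c
    using UV_eq[OF a0 a0] that by simp
  have V_mod: "U x = 0 \<and> V x = w" if "w \<in> a" "x - w \<in> Z" for x w
    using UV_eq[OF a0 that(1)] that(2) by simp
  have Z_iff: "x \<in> Z \<longleftrightarrow> U x = 0 \<and> V x = 0" for x
    using UV_Z UVZ[of x] by force
  define A where "A = Emb ` a"
  define m where "m p q = Emb (V (br (T (inv Emb p)) (inv Emb q)))" for p q
  have invE[simp]: "inv Emb (Emb x) = x" for x :: 'a by (rule inv_f_f[OF Emb_inj])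
  note Esimps = linear_add[OF Emb_linear] linear_diff[OF Emb_linear] linear_scale[OF Emb_linear]
    linear_0[OF Emb_linear]
  have mE: "m (Emb u) (Emb v) = Emb (V (br (T u) v))" for u v unfolding m_def by simp
  have Vcomm: "V (br (T u) v) = V (br (T v) u)" if "u \<in> a" "v \<in> a" for u v
  proof -
    have "V (br (T u) v - br (T v) u) = 0" using UV_Z C3[OF that] Z_def by blast
    thus ?thesis using Vsimps by simp
  qed
  have Vbr: "br (T u) v - V (br (T u) v) \<in> Z" if uv: "u \<in> a" "v \<in> a" for u v
  proof -
    obtain w where w: "w \<in> a" "br (T u) v - w \<in> Z" using C2[OF uv] Z_def by blast
    thus ?thesis using V_mod[OF w] by simp
  qed
  have fd: "fd_comm_assoc_algebra A m"
    unfolding fd_comm_assoc_algebra_def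
  proof (intro conjI ballI allI)
    show "subspace A" unfolding A_def by (rule linear_subspace_image[OF Emb_linear sub])
    obtain B where B: "B \<subseteq> a" "independent B" "a \<subseteq> span B" "card B = dim a" by (rule basis_exists)
    have fB: "finite B" using B independent_bound by blast
    have sB: "span B = a" using B(3) span_minimal[OF B(1) sub] by (rule subset_antisym[rotated])
    have "span (Emb ` B) = Emb ` a" using linear_span_image[OF Emb_linear, of B] sB by simp
    moreover have "Emb ` B \<subseteq> Emb ` a" using B(1) by (rule image_mono)
    ultimately show "\<exists>B. finite B \<and> B \<subseteq> A \<and> span B = A"
      unfolding A_def using fB by blast
  next
    fix p q assume "p \<in> A" "q \<in> A"
    show "m p q \<in> A" unfolding m_def A_def using Va by auto
  next
    fix p q r assume "p \<in> A" "q \<in> A" "r \<in> A"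
    then obtain u v w where "u \<in> a" "v \<in> a" "w \<in> a" "p = Emb u" "q = Emb v" "r = Emb w"
      unfolding A_def by blast
    show "m (p + q) r = m p r + m q r"
      unfolding \<open>p = Emb u\<close> \<open>q = Emb v\<close> \<open>r = Emb w\<close>
      by (simp only: linear_add[OF Emb_linear, symmetric] linear_scale[OF Emb_linear, symmetric] mE) (simp add: Vsimps Esimps)
  next
    fix c p q assume "p \<in> A" "q \<in> A"
    then obtain u v where "u \<in> a" "v \<in> a" "p = Emb u" "q = Emb v"
      unfolding A_def by blast
    show "m (c *\<^sub>R p) q = c *\<^sub>R m p q"
      unfolding \<open>p = Emb u\<close> \<open>q = Emb v\<close>
      by (simp only: linear_add[OF Emb_linear, symmetric] linear_scale[OF Emb_linear, symmetric] mE) (simp add: Vsimps Esimps)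
  next
    fix p q assume "p \<in> A" "q \<in> A"
    then obtain u v where "u \<in> a" "v \<in> a" "p = Emb u" "q = Emb v"
      unfolding A_def by blast
    show "m p q = m q p"
      unfolding \<open>p = Emb u\<close> \<open>q = Emb v\<close> mE using Vcomm[OF \<open>u \<in> a\<close> \<open>v \<in> a\<close>] by simp
  next
    fix p q r assume "p \<in> A" "q \<in> A" "r \<in> A"
    then obtain u v w where uvw: "u \<in> a" "v \<in> a" "w \<in> a" and "p = Emb u" "q = Emb v" "r = Emb w"
      unfolding A_def by blast
    define p1 where "p1 = V (br (T u) v)"
    define q1 where "q1 = V (br (T v) w)"
    have p1a: "p1 \<in> a" and q1a: "q1 \<in> a" unfolding p1_def q1_def using Va by auto
    have q1': "q1 = V (br (T w) v)" unfolding q1_def using Vcomm uvw by blast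
    have e1: "V (br (T p1) w) = V (br (T w) p1)" using Vcomm p1a uvw by blast
    have "br (T w) (br (T u) v - p1) = 0" using ZR Vbr uvw unfolding p1_def by blast
    hence e2: "br (T w) p1 = br (T w) (br (T u) v)" by simp
    have "br (T u) (br (T w) v - q1) = 0" using ZR Vbr uvw unfolding q1' by blast
    hence e3: "br (T u) q1 = br (T u) (br (T w) v)" by simp
    have "br (T w) (T u) \<in> Z" using C1 uvw Z_def by blast
    hence e4: "br (br (T w) (T u)) v = 0" using ZL by blast
    have "V (br (T p1) w) = V (br (T u) q1)"
      unfolding e1 e2 e3 using jac2[of "T w" "T u" v] e4 by (simp add: Vsimps)
    thus "m (m p q) r = m p (m q r)"
      unfolding \<open>p = Emb u\<close> \<open>q = Emb v\<close> \<open>r = Emb w\<close> mE p1_def[symmetric] q1_def[symmetric]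
      by (simp add: mE)
  qed
  define phi where "phi x = (Emb (U x), Emb (V x))" for x
  have iso: "quotient_by_center_iso_aff br A m"
    unfolding quotient_by_center_iso_aff_def
  proof (intro exI[of _ phi] conjI allI)
    show "linear phi" unfolding phi_def
      by (rule linearI) (simp_all add: Usimps Vsimps Esimps)
    show "range phi = A \<times> A"
    proof
      show "range phi \<subseteq> A \<times> A" unfolding phi_def A_def using Ua Va by auto
      show "A \<times> A \<subseteq> range phi"
      proof
        fix pq assume "pq \<in> A \<times> A"
        then obtain u v where uv: "u \<in> a" "v \<in> a" "pq = (Emb u, Emb v)" unfolding A_def by auto
        have "phi (T u + v) = pq" unfolding phi_def using UV_T[OF uv(1,2)] uv(3) by simp
        thus "pq \<in> range phi" by (metis rangeI)
      qed
    qed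
    show "{x. phi x = 0} = lie_center br"
      unfolding Z_def[symmetric] using Z_iff by (auto simp: phi_def Emb_zero_iff zero_prod_def)
    fix x y
    define u where "u = U x" define v where "v = V x" define u' where "u' = U y" define v' where "v' = V y"
    have ua: "u \<in> a" "v \<in> a" "u' \<in> a" "v' \<in> a" unfolding u_def v_def u'_def v'_def using Ua Va by auto
    define c where "c = x - T u - v" define c' where "c' = y - T u' - v'"
    have cZ: "c \<in> Z" "c' \<in> Z" unfolding c_def c'_def u_def v_def u'_def v'_def using UVZ by auto
    have x_eq: "x = T u + v + c" and y_eq: "y = T u' + v' + c'" unfolding c_def c'_def by simp_all
    define w1 where "w1 = V (br (T u) v')"
    define w2 where "w2 = V (br (T u') v)"
    have w1a: "w1 \<in> a" and w2a: "w2 \<in> a" unfolding w1_def w2_def using Va by auto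
    have br_eq: "br x y = br (T u) (T u') + br v v' + (br (T u) v' - w1) - (br (T u') v - w2) + (w1 - w2)"
    proof -
      have "br x y = br (T u) (T u') + br (T u) v' + br v (T u') + br v v'"
        unfolding x_eq y_eq using ZL[OF cZ(1)] ZR[OF cZ(2)] by simp
      moreover have "br v (T u') = - br (T u') v" by (rule anti)
      ultimately show ?thesis by simp
    qed
    have "br x y - (w1 - w2) \<in> Z"
    proof -
      have h1: "br (T u) (T u') \<in> Z" and h2: "br v v' \<in> Z" using C1 ua Z_def by blast+
      have h3: "br (T u) v' - w1 \<in> Z" and h4: "br (T u') v - w2 \<in> Z"
        unfolding w1_def w2_def using Vbr ua by blast+
      have hZ: "br (T u) (T u') + br v v' + (br (T u) v' - w1) - (br (T u') v - w2) \<in> Z"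
        by (rule Zdiff[OF Zadd[OF Zadd[OF h1 h2] h3] h4])
      have eq: "br x y - (w1 - w2) = br (T u) (T u') + br v v' + (br (T u) v' - w1) - (br (T u') v - w2)"
        using br_eq by (simp add: algebra_simps)
      show ?thesis unfolding eq by (rule hZ)
    qed
    hence "U (br x y) = 0 \<and> V (br x y) = w1 - w2" using V_mod adiff w1a w2a by blast
    thus "phi (br x y) = aff_bracket m (phi x) (phi y)"
      unfolding phi_def aff_bracket_def
      by (simp add: mE u_def[symmetric] v_def[symmetric] u'_def[symmetric] v'_def[symmetric]
          w1_def[symmetric] w2_def[symmetric] Esimps)
  qed
  show ?thesis using fd iso by blast
qed



lemma case_all:
  fixes br :: "'a::euclidean_space \<Rightarrow> 'a \<Rightarrow> 'a"
  assumes A: "acs br J" and lie: "lie_algebra br" and Z: "lie_center br = UNIV"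
  shows "\<exists>(A :: (nat \<Rightarrow> real) set) m. fd_comm_assoc_algebra A m \<and> quotient_by_center_iso_aff br A m"
proof -
  interpret acs br J by fact
  show ?thesis
    by (rule KL[OF lie subspace_single_0 linJ]) (auto simp: Z)
qed

lemma case_mid:
  fixes br :: "'a::euclidean_space \<Rightarrow> 'a \<Rightarrow> 'a"
  assumes A: "acs br J" and lie: "lie_algebra br" and dim: "DIM('a) = 4"
    and x: "x \<notin> lie_center br" and c: "c \<in> lie_center br" "c \<noteq> 0"
  shows "\<exists>(A :: (nat \<Rightarrow> real) set) m. fd_comm_assoc_algebra A m \<and> quotient_by_center_iso_aff br A m"
proof -
  interpret acs br J by fact
  define Z where "Z = lie_center br"
  have subZ: "subspace Z" unfolding Z_def by (rule center_subspace[OF bil])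
  have ZL: "br e y = 0" if "e \<in> Z" for e y using that unfolding Z_def lie_center_def by auto
  have ZR: "br y e = 0" if "e \<in> Z" for e y using ZL[OF that, of y] anti[of y e] by simp
  have ZJ: "\<forall>w\<in>Z. J w \<in> Z" unfolding Z_def lie_center_def using center_J by auto
  have cZ: "c \<in> Z" "c \<noteq> 0" using c Z_def by auto
  have span_c: "\<exists>\<alpha> \<beta> e. e \<in> Z \<and> y = \<alpha> *\<^sub>R p + \<beta> *\<^sub>R J p + e" if p: "p \<notin> Z" for p y
  proof -
    obtain a b c' d where "y = a *\<^sub>R p + b *\<^sub>R J p + c' *\<^sub>R c + d *\<^sub>R J c"
      using indep4_span[OF dim indep4W[OF subZ ZJ p cZ]] by blast
    moreover have "c' *\<^sub>R c + d *\<^sub>R J c \<in> Z"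
      using subspace_add[OF subZ subspace_scale[OF subZ cZ(1)] subspace_scale[OF subZ ZJ[rule_format, OF cZ(1)]]] .
    ultimately show ?thesis by (intro exI[of _ a] exI[of _ b] exI[of _ "c' *\<^sub>R c + d *\<^sub>R J c"]) (simp add: add.assoc)
  qed
  define w0 where "w0 = br x (J x)"
  have xZ: "x \<notin> Z" using x Z_def by simp
  have claimB: "\<exists>k. br y y' = k *\<^sub>R w0" for y y'
  proof -
    obtain \<alpha> \<beta> e where e: "e \<in> Z" "y = \<alpha> *\<^sub>R x + \<beta> *\<^sub>R J x + e" using span_c[OF xZ] by blast
    obtain \<alpha>' \<beta>' e' where e': "e' \<in> Z" "y' = \<alpha>' *\<^sub>R x + \<beta>' *\<^sub>R J x + e'" using span_c[OF xZ] by blast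
    have "br (J x) x = - w0" unfolding w0_def by (rule anti)
    hence "br y y' = (\<alpha> * \<beta>' - \<beta> * \<alpha>') *\<^sub>R w0"
      unfolding e(2) e'(2) using ZL[OF e(1)] ZR[OF e'(1)]
      by (simp add: w0_def[symmetric] algebra_simps del: Jr)
    thus ?thesis by blast
  qed
  define p where "p = (if w0 \<in> Z then x else w0)"
  have pZ: "p \<notin> Z" unfolding p_def using xZ by auto
  have mem: "span {p} = {u. \<exists>s. u = s *\<^sub>R p}" by (auto simp: span_singleton)
  show ?thesis
  proof (rule KL[OF lie subspace_span linJ, of "{p}"], unfold Z_def[symmetric] mem)
    fix y
    obtain \<alpha> \<beta> e where e: "e \<in> Z" "y = \<alpha> *\<^sub>R p + \<beta> *\<^sub>R J p + e" using span_c[OF pZ] by blast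
    show "\<exists>u\<in>{u. \<exists>s. u = s *\<^sub>R p}. \<exists>v\<in>{u. \<exists>s. u = s *\<^sub>R p}. y - J u - v \<in> Z"
      using e by (intro bexI[of _ "\<beta> *\<^sub>R p"] bexI[of _ "\<alpha> *\<^sub>R p"]) auto
  next
    fix u v assume uv: "u \<in> {u. \<exists>s. u = s *\<^sub>R p}" "v \<in> {u. \<exists>s. u = s *\<^sub>R p}" and h: "J u + v \<in> Z"
    from uv obtain s t where st: "u = s *\<^sub>R p" "v = t *\<^sub>R p" by blast
    from h have "t *\<^sub>R p + s *\<^sub>R J p \<in> Z" unfolding st by (simp add: add.commute)
    hence "t = 0 \<and> s = 0" by (rule Jinv_indep[OF subZ ZJ pZ])
    thus "u = 0 \<and> v = 0" using st by simp
  next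
    fix u u' assume "u \<in> {u. \<exists>s. u = s *\<^sub>R p}" "u' \<in> {u. \<exists>s. u = s *\<^sub>R p}"
    then obtain s s' where "u = s *\<^sub>R p" "u' = s' *\<^sub>R p" by auto
    thus "br (J u) (J u') \<in> Z \<and> br u u' \<in> Z" using subspace_0[OF subZ] by simp
  next
    fix u v assume "u \<in> {u. \<exists>s. u = s *\<^sub>R p}" "v \<in> {u. \<exists>s. u = s *\<^sub>R p}"
    then obtain s t where st: "u = s *\<^sub>R p" "v = t *\<^sub>R p" by auto
    obtain k where k: "br (J u) v = k *\<^sub>R w0" using claimB by blast
    show "\<exists>w\<in>{u. \<exists>s. u = s *\<^sub>R p}. br (J u) v - w \<in> Z"
    proof (cases "w0 \<in> Z")
      case True
      hence "br (J u) v - 0 \<in> Z" using k subspace_scale[OF subZ] by simp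
      thus ?thesis by (intro bexI[of _ 0]) auto
    next
      case False
      hence "p = w0" unfolding p_def by simp
      thus ?thesis using k subspace_0[OF subZ] by (intro bexI[of _ "k *\<^sub>R p"]) auto
    qed
  next
    fix u v assume "u \<in> {u. \<exists>s. u = s *\<^sub>R p}" "v \<in> {u. \<exists>s. u = s *\<^sub>R p}"
    then obtain s t where "u = s *\<^sub>R p" "v = t *\<^sub>R p" by auto
    thus "br (J u) v - br (J v) u \<in> Z" using subspace_0[OF subZ] by (simp add: algebra_simps)
  qed
qed


definition brspan :: "('a::real_vector \<Rightarrow> 'a \<Rightarrow> 'a) \<Rightarrow> 'a set" where
  "brspan br = span {z. \<exists>x y. z = br x y}"

lemma (in acs) brL: "br x y \<in> brspan br"
  unfolding brspan_def by (rule span_base) blast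

lemma (in acs) Label: assumes "l \<in> brspan br" "l' \<in> brspan br" shows "br l l' = 0"
proof -
  define G where "G = {z. \<exists>x y. z = br x y}"
  have l: "l \<in> span G" and l': "l' \<in> span G" using assms unfolding brspan_def G_def by auto
  have h1: "br g l' = 0" if "g \<in> G" for g
  proof -
    from that obtain a b where g: "g = br a b" unfolding G_def by blast
    show ?thesis
      by (rule span_induct[where P="\<lambda>y. br g y = 0", OF l'])
        (auto simp: subspace_def g metab G_def)
  qed
  show ?thesis
    by (rule span_induct[where P="\<lambda>y. br y l' = 0", OF l]) (auto simp: subspace_def h1)
qed

lemma (in acs) subL: "subspace (brspan br)" unfolding brspan_def by simp


lemma case_zero_ii:
  fixes br :: "'a::euclidean_space \<Rightarrow> 'a \<Rightarrow> 'a"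
  assumes A: "acs br J" and lie: "lie_algebra br" and dim: "DIM('a) = 4"
    and Z0: "lie_center br = {0}"
    and l: "l \<in> brspan br" "l \<noteq> 0" "J l \<in> brspan br"
  shows "\<exists>(A :: (nat \<Rightarrow> real) set) m. fd_comm_assoc_algebra A m \<and> quotient_by_center_iso_aff br A m"
proof -
  interpret acs br J by fact
  define L where "L = brspan br"
  have cent: "x = 0" if "\<forall>y. br x y = 0" for x
    using that Z0 unfolding lie_center_def by auto
  have Lab: "br p q = 0" if "p \<in> L" "q \<in> L" for p q using Label that L_def by auto
  have brL': "br x y \<in> L" for x y using brL L_def by auto
  have subLL: "subspace L" using subL L_def by auto
  have lL: "l \<in> L" "J l \<in> L" using l L_def by auto
  define W where "W = span {l, J l}"
  have WJ: "\<forall>w\<in>W. J w \<in> W" using spanJ W_def by auto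
  have subW: "subspace W" unfolding W_def by simp
  have lW: "l \<in> W" "J l \<in> W" unfolding W_def by (simp_all add: span_base)
  have WL: "W \<subseteq> L" unfolding W_def by (rule span_minimal) (use lL subLL in auto)
  have LW: "L \<subseteq> W"
  proof
    fix l' assume l'L: "l' \<in> L"
    show "l' \<in> W"
    proof (rule ccontr)
      assume "l' \<notin> W"
      from indep4_span[OF dim indep4W[OF subW WJ this lW(1) l(2)]]
      have sp: "\<exists>a b c d. y = a *\<^sub>R l' + b *\<^sub>R J l' + c *\<^sub>R l + d *\<^sub>R J l" for y by blast
      have "\<forall>y. br l y = 0"
      proof
        fix y obtain a b c d where y: "y = a *\<^sub>R l' + b *\<^sub>R J l' + c *\<^sub>R l + d *\<^sub>R J l" using sp by blast
        have "br l l' = 0" "br (J l) l' = 0" "br (J l) l = 0" using Lab lL l'L by auto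
        thus "br l y = 0" unfolding y by simp
      qed
      hence "l = 0" by (rule cent)
      with l(2) show False ..
    qed
  qed
  hence LeqW: "L = W" using WL by auto
  have LJ: "J p \<in> L" if "p \<in> L" for p using WJ LeqW that by auto
  obtain v where v: "v \<notin> W"
  proof -
    have "W \<noteq> UNIV"
    proof
      assume "W = UNIV"
      hence "\<forall>y. br l y = 0" using Lab lL LeqW by auto
      thus False using cent l(2) by blast
    qed
    thus ?thesis using that by blast
  qed
  have sp: "\<exists>a b c d. y = a *\<^sub>R v + b *\<^sub>R J v + c *\<^sub>R l + d *\<^sub>R J l" for y
    using indep4_span[OF dim indep4W[OF subW WJ v lW(1) l(2)]] by blast
  have centL: "p = 0" if pL: "p \<in> L" and h1: "br v p = 0" and h2: "br v (J p) = 0" for p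
  proof -
    have "\<forall>y. br p y = 0"
    proof
      fix y obtain a b c d where y: "y = a *\<^sub>R v + b *\<^sub>R J v + c *\<^sub>R l + d *\<^sub>R J l" using sp by blast
      have "br p v = 0" using h1 anti[of v p] by simp
      moreover have "br (J p) v = 0" using h2 anti[of v "J p"] by (simp del: Jr)
      moreover have "br p l = 0" "br (J p) l = 0" using Lab pL LJ lL by auto
      ultimately show "br p y = 0" unfolding y by simp
    qed
    thus ?thesis by (rule cent)
  qed
  have star: "br v (br v (J q)) = br v (J (br v q))" if "q \<in> L" for q
  proof -
    have e1: "br (br v (J v)) q = br v (br (J v) q) - br (J v) (br v q)" by (rule jac2)
    have e2: "br (br v (J v)) q = 0" using Lab brL' that by blast
    have e3: "br v (J q) = - br (J v) q" by (rule Jr)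
    have e4: "br v (J (br v q)) = - br (J v) (br v q)" by (rule Jr)
    show ?thesis unfolding e3 e4 using e1 e2 by (simp del: Jr)
  qed
  have inj: "p = 0" if pL: "p \<in> L" and h: "br v p = 0" for p
  proof -
    define m where "m = br v (J p)"
    have mL: "m \<in> L" unfolding m_def by (rule brL')
    have "br v m = br v (J (br v p))" unfolding m_def by (rule star[OF pL])
    hence m1: "br v m = 0" using h by (simp del: Jr)
    have "br v (J m) = br v (br v (J (J p)))" unfolding m_def using star[OF LJ[OF pL]] by (simp del: Jr)
    hence m2: "br v (J m) = 0" using h by (simp del: Jr)
    have "m = 0" using centL[OF mL m1 m2] .
    hence "br v (J p) = 0" unfolding m_def .
    thus ?thesis using centL[OF pL h] by blast
  qed
  have i2: "indep2 (br v l) (br v (J l))"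
    unfolding indep2_def
  proof (intro allI impI)
    fix s t assume "s *\<^sub>R br v l + t *\<^sub>R br v (J l) = 0"
    hence "br v (s *\<^sub>R l + t *\<^sub>R J l) = 0" by (simp del: Jr)
    moreover have "s *\<^sub>R l + t *\<^sub>R J l \<in> L"
      using subspace_add[OF subLL subspace_scale[OF subLL lL(1)] subspace_scale[OF subLL lL(2)]] .
    ultimately have "s *\<^sub>R l + t *\<^sub>R J l = 0" using inj by blast
    thus "s = 0 \<and> t = 0" using indep2J[OF l(2)] unfolding indep2_def by blast
  qed
  have h1: "br v l \<in> span {l, J l}" using brL'[of v l] LeqW W_def by (simp del: Jr)
  have h2: "br v (J l) \<in> span {l, J l}" using brL'[of v "J l"] LeqW W_def by (simp del: Jr)
  have "W \<subseteq> span {br v l, br v (J l)}"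
    unfolding W_def by (rule indep2_spans[OF indep2J[OF l(2)] i2 h1 h2])
  moreover have "- br v (J v) \<in> W" using brL' LeqW subspace_neg[OF subW] by blast
  ultimately obtain s t where st: "- br v (J v) = s *\<^sub>R br v l + t *\<^sub>R br v (J l)"
    using span2 by blast
  define l2 where "l2 = s *\<^sub>R l + t *\<^sub>R J l"
  have l2W: "l2 \<in> W" unfolding l2_def W_def using span2 by blast
  have l2L: "l2 \<in> L" "J l2 \<in> L" using l2W LeqW LJ by auto
  have l2eq: "br v l2 = - br v (J v)" unfolding l2_def st by (simp del: Jr)
  define y2 where "y2 = J v + l2"
  have vy2: "br v y2 = 0" unfolding y2_def using l2eq by (simp del: Jr)
  have y2v: "br y2 v = 0" using vy2 anti[of v y2] by simp
  have lJl: "l \<noteq> J l" using indep2_independent(2)[OF indep2J[OF l(2)]] .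
  obtain T where T: "linear T" "T l = v" "T (J l) = - y2"
  proof -
    obtain g where g: "linear g" "\<forall>x\<in>{l, J l}. g x = (if x = l then v else - y2)"
      using linear_independent_extend[where f="\<lambda>x. if x = l then v else - y2",
          OF indep2_independent(1)[OF indep2J[OF l(2)]]] by blast
    have g1: "g l = v" using g(2) by simp
    have g2: "g (J l) = - y2" using g(2) lJl by auto
    show ?thesis by (rule that[OF g(1) g1 g2])
  qed
  have memW: "u \<in> W \<longleftrightarrow> (\<exists>s t. u = s *\<^sub>R l + t *\<^sub>R J l)" for u unfolding W_def by (rule span2)
  have Tu: "T (a *\<^sub>R l + b *\<^sub>R J l) = a *\<^sub>R v - b *\<^sub>R y2" for a b
    using T by (simp add: linear_add linear_scale)
  show ?thesis
  proof (rule KL[OF lie subW T(1)], unfold Z0)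
    fix y
    obtain a b c d where y: "y = a *\<^sub>R v + b *\<^sub>R J v + c *\<^sub>R l + d *\<^sub>R J l" using sp by blast
    have u: "a *\<^sub>R l + (- b) *\<^sub>R J l \<in> W" unfolding memW by blast
    have "c *\<^sub>R l + d *\<^sub>R J l \<in> W" unfolding memW by blast
    hence w: "c *\<^sub>R l + d *\<^sub>R J l - b *\<^sub>R l2 \<in> W"
      using subspace_diff[OF subW _ subspace_scale[OF subW l2W]] by blast
    have "y - T (a *\<^sub>R l + (- b) *\<^sub>R J l) - (c *\<^sub>R l + d *\<^sub>R J l - b *\<^sub>R l2) = 0"
      unfolding Tu y y2_def by (simp add: algebra_simps)
    thus "\<exists>u\<in>W. \<exists>v\<in>W. y - T u - v \<in> {0}" using u w by blast
  next
    fix u v' assume uW: "u \<in> W" and v'W: "v' \<in> W" and h: "T u + v' \<in> {0}"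
    from uW obtain a b where u: "u = a *\<^sub>R l + b *\<^sub>R J l" using memW by blast
    have "a *\<^sub>R v + (- b) *\<^sub>R J v = - (v' - b *\<^sub>R l2)"
      using h unfolding u Tu y2_def by (simp add: algebra_simps eq_neg_iff_add_eq_0)
    moreover have "- (v' - b *\<^sub>R l2) \<in> W"
      using subspace_neg[OF subW subspace_diff[OF subW v'W subspace_scale[OF subW l2W]]] .
    ultimately have "a *\<^sub>R v + (- b) *\<^sub>R J v \<in> W" by simp
    hence "a = 0 \<and> - b = 0" by (rule Jinv_indep[OF subW WJ v])
    hence "u = 0" unfolding u by simp
    moreover have "v' = 0" using h \<open>u = 0\<close> T(1) by (simp add: linear_0)
    ultimately show "u = 0 \<and> v' = 0" by simp
  next
    fix u u' assume uW: "u \<in> W" and u'W: "u' \<in> W"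
    from uW obtain a b where u: "u = a *\<^sub>R l + b *\<^sub>R J l" using memW by blast
    from u'W obtain a' b' where u': "u' = a' *\<^sub>R l + b' *\<^sub>R J l" using memW by blast
    have "br (T u) (T u') = 0" unfolding u u' Tu using vy2 y2v by (simp del: Jr)
    moreover have "br u u' = 0" using Lab uW u'W LeqW by auto
    ultimately show "br (T u) (T u') \<in> {0} \<and> br u u' \<in> {0}" by simp
  next
    fix u v' assume "u \<in> W" "v' \<in> W"
    show "\<exists>w\<in>W. br (T u) v' - w \<in> {0}" using brL' LeqW by (intro bexI[of _ "br (T u) v'"]) auto
  next
    fix u u' assume uW: "u \<in> W" and u'W: "u' \<in> W"
    from uW obtain a b where u: "u = a *\<^sub>R l + b *\<^sub>R J l" using memW by blast
    from u'W obtain a' b' where u': "u' = a' *\<^sub>R l + b' *\<^sub>R J l" using memW by blast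
    have z: "br l2 l = 0" "br (J l2) l = 0" using Lab l2L lL by auto
    have "br (T u) u' - br (T u') u = 0"
      unfolding u u' Tu y2_def using z by (simp add: algebra_simps)
    thus "br (T u) u' - br (T u') u \<in> {0}" by simp
  qed
qed


lemma case_zero_ib:
  fixes br :: "'a::euclidean_space \<Rightarrow> 'a \<Rightarrow> 'a"
  assumes A: "acs br J" and lie: "lie_algebra br" and dim: "DIM('a) = 4"
    and Z0: "lie_center br = {0}"
    and hyp: "\<forall>l\<in>brspan br. l \<noteq> 0 \<longrightarrow> J l \<notin> brspan br"
    and l1: "l1 \<in> brspan br" "l1 \<noteq> 0" and l2: "l2 \<in> brspan br" "l2 \<notin> span {l1}"
  shows "\<exists>(A :: (nat \<Rightarrow> real) set) m. fd_comm_assoc_algebra A m \<and> quotient_by_center_iso_aff br A m"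
proof -
  interpret acs br J by fact
  define L where "L = brspan br"
  have Lab: "br p q = 0" if "p \<in> L" "q \<in> L" for p q using Label that L_def by auto
  have brL': "br x y \<in> L" for x y using brL L_def by auto
  have subLL: "subspace L" using subL L_def by auto
  have hypL: "q = 0" if "q \<in> L" "J q \<in> L" for q using hyp that L_def by auto
  define W1 where "W1 = span {l1, J l1}"
  have WJ1: "\<forall>w\<in>W1. J w \<in> W1" using spanJ W1_def by auto
  have subW1: "subspace W1" unfolding W1_def by simp
  have l1W: "l1 \<in> W1" unfolding W1_def by (simp add: span_base)
  have l1L: "l1 \<in> L" and l2L: "l2 \<in> L" using l1 l2 L_def by auto
  have l2W: "l2 \<notin> W1"
  proof
    assume "l2 \<in> W1"
    then obtain s t where st: "l2 = s *\<^sub>R l1 + t *\<^sub>R J l1" unfolding W1_def span2 by blast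
    show False
    proof (cases "t = 0")
      case True
      hence "l2 \<in> span {l1}" using st by (auto simp: span_singleton)
      with l2(2) show False ..
    next
      case False
      have "J l1 = inverse t *\<^sub>R (l2 - s *\<^sub>R l1)" using st False by simp
      moreover have "inverse t *\<^sub>R (l2 - s *\<^sub>R l1) \<in> L"
        using subspace_scale[OF subLL subspace_diff[OF subLL l2L subspace_scale[OF subLL l1L]]] .
      ultimately have "J l1 \<in> L" by simp
      hence "l1 = 0" using hypL l1L by blast
      with l1(2) show False ..
    qed
  qed
  have ind: "indep4 l2 (J l2) l1 (J l1)" by (rule indep4W[OF subW1 WJ1 l2W l1W l1(2)])
  note indE = ind[unfolded indep4_def, rule_format]
  have sp: "\<exists>a b c d. y = a *\<^sub>R l2 + b *\<^sub>R J l2 + c *\<^sub>R l1 + d *\<^sub>R J l1" for y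
    using indep4_span[OF dim ind] by blast
  define a where "a = span {l2, l1}"
  have mem: "u \<in> a \<longleftrightarrow> (\<exists>s t. u = s *\<^sub>R l2 + t *\<^sub>R l1)" for u unfolding a_def by (rule span2)
  have suba: "subspace a" unfolding a_def by simp
  have aL: "a \<subseteq> L" unfolding a_def by (rule span_minimal) (use l1L l2L subLL in auto)
  have La: "L \<subseteq> a"
  proof
    fix l3 assume l3: "l3 \<in> L"
    obtain p q r s where y: "l3 = p *\<^sub>R l2 + q *\<^sub>R J l2 + r *\<^sub>R l1 + s *\<^sub>R J l1" using sp by blast
    define z where "z = q *\<^sub>R l2 + s *\<^sub>R l1"
    have zL: "z \<in> L" unfolding z_def
      using subspace_add[OF subLL subspace_scale[OF subLL l2L] subspace_scale[OF subLL l1L]] .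
    have "J z = l3 - (p *\<^sub>R l2 + r *\<^sub>R l1)" unfolding z_def y by (simp add: algebra_simps)
    moreover have "l3 - (p *\<^sub>R l2 + r *\<^sub>R l1) \<in> L"
      using subspace_diff[OF subLL l3 subspace_add[OF subLL subspace_scale[OF subLL l2L] subspace_scale[OF subLL l1L]]] .
    ultimately have "J z \<in> L" by simp
    hence "z = 0" using hypL zL by blast
    hence "q *\<^sub>R l2 + 0 *\<^sub>R J l2 + s *\<^sub>R l1 + 0 *\<^sub>R J l1 = 0" unfolding z_def by simp
    hence "q = 0 \<and> s = 0" using indE by blast
    hence "l3 = p *\<^sub>R l2 + r *\<^sub>R l1" using y by simp
    thus "l3 \<in> a" unfolding mem by blast
  qed
  show ?thesis
  proof (rule KL[OF lie suba linJ], unfold Z0)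
    fix y
    obtain p q r s where y: "y = p *\<^sub>R l2 + q *\<^sub>R J l2 + r *\<^sub>R l1 + s *\<^sub>R J l1" using sp by blast
    have u: "q *\<^sub>R l2 + s *\<^sub>R l1 \<in> a" "p *\<^sub>R l2 + r *\<^sub>R l1 \<in> a" unfolding mem by blast+
    have "y - J (q *\<^sub>R l2 + s *\<^sub>R l1) - (p *\<^sub>R l2 + r *\<^sub>R l1) = 0" unfolding y by (simp add: algebra_simps)
    thus "\<exists>u\<in>a. \<exists>v\<in>a. y - J u - v \<in> {0}" using u by blast
  next
    fix u v assume "u \<in> a" "v \<in> a" and h: "J u + v \<in> {0}"
    then obtain s t s' t' where u: "u = s *\<^sub>R l2 + t *\<^sub>R l1" and v: "v = s' *\<^sub>R l2 + t' *\<^sub>R l1"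
      unfolding mem by blast
    have "s' *\<^sub>R l2 + s *\<^sub>R J l2 + t' *\<^sub>R l1 + t *\<^sub>R J l1 = 0" using h unfolding u v by (simp add: algebra_simps)
    hence "s' = 0 \<and> s = 0 \<and> t' = 0 \<and> t = 0" by (rule indE)
    thus "u = 0 \<and> v = 0" unfolding u v by simp
  next
    fix u u' assume "u \<in> a" "u' \<in> a"
    hence "br u u' = 0" using Lab aL by blast
    thus "br (J u) (J u') \<in> {0} \<and> br u u' \<in> {0}" by simp
  next
    fix u v assume "u \<in> a" "v \<in> a"
    show "\<exists>w\<in>a. br (J u) v - w \<in> {0}" using brL' La by (intro bexI[of _ "br (J u) v"]) auto
  next
    fix u v assume "u \<in> a" "v \<in> a"
    show "br (J u) v - br (J v) u \<in> {0}" using symJ[of u v] by simp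
  qed
qed

lemma case_zero_ia:
  fixes br :: "'a::euclidean_space \<Rightarrow> 'a \<Rightarrow> 'a"
  assumes A: "acs br J" and dim: "DIM('a) = 4"
    and Z0: "lie_center br = {0}"
    and w: "w \<in> brspan br" "w \<noteq> 0" and all: "\<forall>l\<in>brspan br. l \<in> span {w}"
  shows False
proof -
  interpret acs br J by fact
  have cent: "x = 0" if "\<forall>y. br x y = 0" for x
    using that Z0 unfolding lie_center_def by auto
  define cf where "cf z = (z \<bullet> w) / (w \<bullet> w)" for z
  have ww: "w \<bullet> w \<noteq> 0" using w(2) by simp
  have kw: "z = cf z *\<^sub>R w" if zw: "z \<in> span {w}" for z
  proof -
    obtain k where "z = k *\<^sub>R w" using zw by (auto simp: span_singleton)
    thus ?thesis unfolding cf_def using ww by simp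
  qed
  have brw: "br x y = cf (br x y) *\<^sub>R w" for x y using kw all brL by blast
  have lincf: "linear cf" unfolding cf_def
    by (rule linearI) (simp_all add: inner_add_left add_divide_distrib)
  obtain y0 where y0: "br y0 w \<noteq> 0"
  proof (rule ccontr)
    assume "\<not> thesis"
    hence "\<forall>x. br x w = 0" using that by blast
    hence "\<forall>y. br w y = 0" using anti by (metis neg_0_equal_iff_equal)
    hence "w = 0" by (rule cent)
    with w(2) show False ..
  qed
  define t where "t = cf (br y0 w)"
  have y0w: "br y0 w = t *\<^sub>R w" unfolding t_def by (rule brw)
  have t0: "t \<noteq> 0" using y0 y0w by auto
  have Kab: "br x k = 0" if x: "br x w = 0" and k: "br k w = 0" for x k
  proof -
    have e1: "br (br y0 x) k = br y0 (br x k) - br x (br y0 k)" by (rule jac2)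
    have "br (br y0 x) k = cf (br y0 x) *\<^sub>R br w k" by (subst brw) simp
    also have "br w k = 0" using k anti[of k w] by simp
    finally have e2: "br (br y0 x) k = 0" by simp
    have "br x (br y0 k) = cf (br y0 k) *\<^sub>R br x w" by (subst brw) simp
    hence e3: "br x (br y0 k) = 0" using x by simp
    have "br y0 (br x k) = 0" using e1 e2 e3 by simp
    moreover have "br y0 (br x k) = cf (br x k) *\<^sub>R (t *\<^sub>R w)" by (subst brw) (simp add: y0w)
    ultimately have "cf (br x k) * t = 0" using w(2) by simp
    hence "cf (br x k) = 0" using t0 by simp
    thus ?thesis using brw[of x k] by simp
  qed
  define f where "f x = cf (br x w)" for x
  define g where "g x = cf (br x y0)" for x
  have lf: "linear f" unfolding f_def
    by (rule linearI) (simp_all add: linear_add[OF lincf] linear_scale[OF lincf])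
  have lg: "linear g" unfolding g_def
    by (rule linearI) (simp_all add: linear_add[OF lincf] linear_scale[OF lincf])
  obtain x0 where x0: "x0 \<noteq> 0" "f x0 = 0" "g x0 = 0" using two_func[OF dim lf lg] by blast
  have x0w: "br x0 w = 0" using brw[of x0 w] x0(2) f_def by simp
  have x0y0: "br x0 y0 = 0" using brw[of x0 y0] x0(3) g_def by simp
  have "\<forall>y. br x0 y = 0"
  proof
    fix y
    define k where "k = y - (cf (br y w) / t) *\<^sub>R y0"
    have "br k w = cf (br y w) *\<^sub>R w - (cf (br y w) / t) *\<^sub>R (t *\<^sub>R w)"
      unfolding k_def using brw[of y w] y0w by simp
    hence kw0: "br k w = 0" using t0 by simp
    have "br x0 y = br x0 (k + (cf (br y w) / t) *\<^sub>R y0)" unfolding k_def by simp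
    hence "br x0 y = br x0 k + (cf (br y w) / t) *\<^sub>R br x0 y0" by (simp only: radd rmul)
    thus "br x0 y = 0" using Kab[OF x0w kw0] x0y0 by simp
  qed
  hence "x0 = 0" by (rule cent)
  with x0(1) show False ..
qed


theorem mainTheorem11:
  fixes br :: "'a::euclidean_space \<Rightarrow> 'a \<Rightarrow> 'a"
  assumes "DIM('a) = 4"
    and "lie_algebra br"
    and "\<exists>J. abelian_complex_structure br J"
  shows "\<exists>(A :: (nat \<Rightarrow> real) set) m. fd_comm_assoc_algebra A m \<and>
           quotient_by_center_iso_aff br A m"
proof -
  note dim = assms(1) and lie = assms(2)
  obtain J where acsJ: "abelian_complex_structure br J" using assms(3) by blast
  have A: "acs br J"
    using lie acsJ unfolding lie_algebra_def abelian_complex_structure_def acs_def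
    by auto
  interpret acs br J by (rule A)
  define Z where "Z = lie_center br"
  have subZ: "subspace Z" unfolding Z_def by (rule center_subspace[OF bil])
  show ?thesis
  proof (cases "Z = UNIV")
    case True
    thus ?thesis using case_all[OF A lie] Z_def by simp
  next
    case notall: False
    show ?thesis
    proof (cases "Z = {0}")
      case False
      obtain x where x: "x \<notin> Z" using notall by blast
      obtain c where c: "c \<in> Z" "c \<noteq> 0" using False subspace_0[OF subZ] by blast
      show ?thesis using case_mid[OF A lie dim, of x c] x c Z_def by simp
    next
      case True
      hence Z0: "lie_center br = {0}" using Z_def by simp
      have "\<exists>l1\<in>brspan br. l1 \<noteq> 0"
      proof (rule ccontr)
        assume "\<not> ?thesis"
        hence "\<forall>x y. br x y = 0" using brL by blast
        hence "Z = UNIV" unfolding Z_def lie_center_def by auto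
        with notall show False ..
      qed
      then obtain l1 where l1: "l1 \<in> brspan br" "l1 \<noteq> 0" by blast
      show ?thesis
      proof (cases "\<exists>l\<in>brspan br. l \<noteq> 0 \<and> J l \<in> brspan br")
        case True
        then obtain l where "l \<in> brspan br" "l \<noteq> 0" "J l \<in> brspan br" by blast
        thus ?thesis using case_zero_ii[OF A lie dim Z0] by blast
      next
        case hyp: False
        show ?thesis
        proof (cases "\<exists>l2\<in>brspan br. l2 \<notin> span {l1}")
          case True
          then obtain l2 where "l2 \<in> brspan br" "l2 \<notin> span {l1}" by blast
          thus ?thesis using case_zero_ib[OF A lie dim Z0 _ l1] hyp by blast
        next
          case False
          hence "\<forall>l\<in>brspan br. l \<in> span {l1}" by blast
          hence False using case_zero_ia[OF A dim Z0 l1] by blast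
          thus ?thesis ..
        qed
      qed
    qed
  qed
qed

end
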